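(* Fix $k, n \in \mathbb{N}$. The number of permutations $w \in S_{kn+k-1}$ with exactly $n$ descents such that ${\rm ad}(w)$ is a $(k-1)$-ballot sequence equals $\frac{1}{n+1} A_{n,kn+k-1}$. In particular, the number of Dyck permutations in $S_{2n+1}$ is the Eulerian-Catalan number $EC_n = \frac{1}{n+1}A_{n,2n+1}$.
   Context: $A_{m,n}$ denotes the Eulerian number: the number of permutations of $[n]$ with exactly $m$ descents. For a permutation $w = w_1\cdots w_m$, ${\rm ad}(w)$ is the $0/1$ sequence of length $m-1$ with ${\rm ad}(w)_i = 0$ if $w_i < w_{i+1}$ and $1$ if $w_i > w_{i+1}$. A $0/1$ sequence is an $r$-ballot sequence if every initial segment contains at least $r$ times as many $0$'s as $1$'s. A permutation $w \in S_{2n+1}$ is a Dyck permutation if the lattice path $L(w)$ — starting at $(0,0)$, with $i$-th step $(1,0)$ if $w_i<w_{i+1}$ and $(0,1)$ if $w_i>w_{i+1}$ — ends at $(n,n)$ and all its points satisfy $y \leq x$ (equivalently, $w$ has $n$ descents and ${\rm ad}(w)$ is a $1$-ballot sequence). *)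

theory Defs
  imports Complex_Main
begin

definition perms :: "nat \<Rightarrow> nat list set" where
  "perms m = {w. distinct w \<and> set w = {1..m}}"

definition ad :: "nat list \<Rightarrow> nat list" where
  "ad w = map (\<lambda>i. if w ! i < w ! (i + 1) then 0 else 1) [0..<length w - 1]"

definition des :: "nat list \<Rightarrow> nat" where
  "des w = card {i. i + 1 < length w \<and> w ! i > w ! (i + 1)}"

definition eulerian :: "nat \<Rightarrow> nat \<Rightarrow> nat" where
  "eulerian m n = card {w \<in> perms n. des w = m}"

definition ballot :: "nat \<Rightarrow> nat list \<Rightarrow> bool" where
  "ballot r s \<longleftrightarrow> (\<forall>j \<le> length s.
      r * count_list (take j s) 1 \<le> count_list (take j s) 0)"

text \<open>Points of the lattice path L(w): after j steps, x = number of ascents and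
  y = number of descents among the first j adjacent pairs.\<close>
definition path_point :: "nat list \<Rightarrow> nat \<Rightarrow> nat \<times> nat" where
  "path_point w j = (count_list (take j (ad w)) 0, count_list (take j (ad w)) 1)"

definition dyck_perm :: "nat \<Rightarrow> nat list \<Rightarrow> bool" where
  "dyck_perm n w \<longleftrightarrow> w \<in> perms (2 * n + 1)
     \<and> path_point w (length (ad w)) = (n, n)
     \<and> (\<forall>j \<le> length (ad w). snd (path_point w j) \<le> fst (path_point w j))"

end

theory Submission
  imports Defs
begin


lemma value_count:
  fixes a :: "nat \<Rightarrow> int" and N k :: nat
  assumes k: "k \<ge> 1"
  and succ: "\<And>j. j < N \<Longrightarrow> \<exists>i<N. i \<noteq> j \<and> a i = a j + 1 - int k * of_bool (i < j)"
  and N: "N > 0"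
  shows "card {j. j < N \<and> (\<forall>u<N. u \<noteq> j \<longrightarrow> a u - a j + int k * of_bool (u < j) > 0)} = k"
proof -
  define B where "B x = a (x mod N) + int k * int (x div N)" for x
  define M where "M j = Min (B ` {j..<j+N})" for j
  define good where "good j \<longleftrightarrow> (\<forall>u<N. u \<noteq> j \<longrightarrow> a u - a j + int k * of_bool (u < j) > 0)" for j
  obtain i0 where "i0 < N" "i0 \<noteq> 0" using succ[OF N] by blast
  hence N2: "N \<ge> 2" by linarith
  have Bshift: "B (x + N) = B x + int k" for x
    using N by (simp add: B_def algebra_simps)
  have Blt: "x < N \<Longrightarrow> B x = a x" for x by (simp add: B_def)
  have Bge: "N \<le> x \<Longrightarrow> x < N + N \<Longrightarrow> B x = a (x - N) + int k" for x
    using Bshift[of "x - N"] Blt[of "x-N"] by simp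
  have goodB: "good j \<longleftrightarrow> (\<forall>x. j < x \<and> x < j + N \<longrightarrow> B j < B x)" if j: "j < N" for j
  proof
    assume g: "good j"
    show "\<forall>x. j < x \<and> x < j + N \<longrightarrow> B j < B x"
    proof (intro allI impI)
      fix x assume x: "j < x \<and> x < j + N"
      show "B j < B x"
      proof (cases "x < N")
        case True
        then show ?thesis using g x j unfolding good_def by (auto simp: Blt)
      next
        case False
        then have "x - N < N" "x - N \<noteq> j" "x - N < j" using x j by auto
        moreover have "a (x - N) - a j + int k * of_bool (x - N < j) > 0"
          using g \<open>x - N < N\<close> \<open>x - N \<noteq> j\<close> unfolding good_def by blast
        ultimately show ?thesis using x j False by (simp add: Blt Bge)
      qed
    qed
  next
    assume h: "\<forall>x. j < x \<and> x < j + N \<longrightarrow> B j < B x"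
    show "good j" unfolding good_def
    proof (intro allI impI)
      fix u assume u: "u < N" "u \<noteq> j"
      show "a u - a j + int k * of_bool (u < j) > 0"
      proof (cases "u < j")
        case True
        then have "B j < B (u + N)" using h u j by (metis add_less_cancel_right less_trans_Suc less_imp_le_nat not_less trans_less_add2)
        then show ?thesis using True u j by (simp add: Blt Bshift)
      next
        case False
        then have "B j < B u" using h u by auto
        then show ?thesis using False u j by (simp add: Blt)
      qed
    qed
  qed
  have succB: "\<exists>x. j < x \<and> x < j + N \<and> B x = B j + 1" if j: "j < N" for j
  proof -
    obtain i where i: "i < N" "i \<noteq> j" "a i = a j + 1 - int k * of_bool (i < j)" using succ[OF j] by blast
    show ?thesis
    proof (cases "i < j")
      case True
      then show ?thesis using i j by (intro exI[of _ "i + N"]) (simp add: Blt Bshift)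
    next
      case False
      then show ?thesis using i j by (intro exI[of _ i]) (simp add: Blt)
    qed
  qed
  have step: "M (Suc j) = M j + of_bool (good j)" if j: "j < N" for j
  proof -
    define R where "R = B ` {j<..<j+N}"
    have "Suc j \<in> {j<..<j+N}" using N2 by auto
    hence Rne: "R \<noteq> {}" unfolding R_def by blast
    have Rfin: "finite R" unfolding R_def by simp
    have e1: "{j..<j+N} = insert j {j<..<j+N}" using N by auto
    have e2: "{Suc j..<Suc j+N} = insert (j+N) {j<..<j+N}" using N by auto
    have Mj: "M j = min (B j) (Min R)" unfolding M_def e1 R_def
      using Rfin Rne R_def by (simp add: Min_insert)
    have MSj: "M (Suc j) = min (B j + int k) (Min R)" unfolding M_def e2 R_def
      using Rfin Rne R_def by (simp add: Min_insert Bshift)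
    show ?thesis
    proof (cases "good j")
      case True
      then have all: "\<forall>y\<in>R. B j < y" using goodB[OF j] unfolding R_def by auto
      have lo: "B j < Min R" using all Rfin Rne by simp
      obtain x where x: "j < x" "x < j + N" "B x = B j + 1" using succB[OF j] by blast
      have "B x \<in> R" using x unfolding R_def by (intro imageI) auto
      hence "Min R \<le> B j + 1" using Rfin x by (metis Min_le)
      hence "Min R = B j + 1" using lo by linarith
      then show ?thesis using Mj MSj True k by simp
    next
      case False
      then obtain x where x: "j < x" "x < j + N" "B x \<le> B j" using goodB[OF j] by force
      have "B x \<in> R" using x unfolding R_def by (intro imageI) auto
      hence "Min R \<le> B j" using Rfin x by (metis Min_le order_trans)
      then show ?thesis using Mj MSj False k by simp
    qed
  qed
  have MN: "M N = M 0 + int k"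
  proof -
    have "{N..<N+N} = (\<lambda>x. x + N) ` {0..<N}"
      by (auto simp: image_iff intro!: exI[of _ "_ - N"])
    hence "B ` {N..<N+N} = B ` ((\<lambda>x. x + N) ` {0..<N})" by simp
    also have "\<dots> = (\<lambda>y. y + int k) ` (B ` {0..<N})"
      unfolding image_image Bshift by simp
    finally have "B ` {N..<N+N} = (\<lambda>y. y + int k) ` (B ` {0..<N})" .
    moreover have "Min ((\<lambda>y. y + int k) ` (B ` {0..<N})) = Min (B ` {0..<N}) + int k"
      using N by (subst mono_Min_commute[symmetric]) (auto simp: mono_def)
    ultimately show ?thesis unfolding M_def by simp
  qed
  have "(\<Sum>j<N. M (Suc j) - M j) = M N - M 0" by (rule sum_lessThan_telescope)
  also have "\<dots> = int k" using MN by simp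
  finally have "(\<Sum>j<N. (of_bool (good j) :: int)) = int k"
    using step by simp
  hence "int (card {j. j < N \<and> good j}) = int k"
  proof -
    have "{..<N} \<inter> Collect good = {j. j < N \<and> good j}" by auto
    moreover have "(\<Sum>j<N. (of_bool (good j) :: int)) = int (card ({..<N} \<inter> Collect good))"
      by (simp add: sum.If_cases) 
    ultimately show ?thesis using \<open>(\<Sum>j<N. (of_bool (good j) :: int)) = int k\<close> by simp
  qed
  thus ?thesis unfolding good_def by simp
qed



definition fc :: "nat list \<Rightarrow> nat \<Rightarrow> nat" where "fc c i = c ! (i mod length c)"
definition cdb :: "nat list \<Rightarrow> nat \<Rightarrow> bool" where "cdb c i \<longleftrightarrow> fc c (Suc i) < fc c i"
definition Sd :: "nat list \<Rightarrow> nat \<Rightarrow> nat" where "Sd c x = (\<Sum>i<x. of_bool (cdb c i))"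
definition cdes :: "nat list \<Rightarrow> nat" where "cdes c = Sd c (length c)"
definition good0 :: "nat \<Rightarrow> nat list \<Rightarrow> bool" where
  "good0 k c \<longleftrightarrow> (\<forall>t. 0 < t \<and> t < length c \<longrightarrow> k * Sd c t < t)"
definition subm :: "nat \<Rightarrow> nat \<Rightarrow> nat \<Rightarrow> nat" where "subm N x y = (x + N - y) mod N"
definition T :: "nat \<Rightarrow> nat list \<Rightarrow> nat list" where
  "T p c = map (\<lambda>x. subm (length c) x (c!p)) (rotate p c)"
definition arr :: "nat \<Rightarrow> nat list set" where "arr N = {c. distinct c \<and> set c = {0..<N}}"
definition HH :: "nat list \<Rightarrow> nat \<Rightarrow> nat \<Rightarrow> int" where
  "HH c k x = int x - int k * int (Sd c x)"

lemma arr_len: "c \<in> arr N \<Longrightarrow> length c = N"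
  unfolding arr_def by (metis (mono_tags, lifting) mem_Collect_eq distinct_card card_atLeastLessThan diff_zero)

lemma arr_nth: "c \<in> arr N \<Longrightarrow> i < N \<Longrightarrow> c ! i < N"
proof -
  assume a: "c \<in> arr N" "i < N"
  hence "c ! i \<in> set c" using arr_len[of c N] by simp
  thus ?thesis using a unfolding arr_def by simp
qed

lemma fc_lt: "c \<in> arr N \<Longrightarrow> N > 0 \<Longrightarrow> fc c i < N"
proof -
  assume a: "c \<in> arr N" "N > 0"
  hence "i mod length c < N" using arr_len[of c N] by simp
  thus ?thesis unfolding fc_def using a arr_len[of c N] arr_nth by blast
qed

lemma fc_periodic: "fc c (i + length c) = fc c i"
  unfolding fc_def by simp



lemma sum_periodic:
  fixes g :: "nat \<Rightarrow> 'a::ab_group_add"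
  assumes "\<And>i. g (i + N) = g i"
  shows "(\<Sum>i<N. g (x + i)) = (\<Sum>i<N. g i)"
proof (induction x)
  case 0 then show ?case by simp
next
  case (Suc x)
  have a: "(\<Sum>i<Suc N. g (x + i)) = (\<Sum>i<N. g (x + i)) + g (x + N)" by simp
  have b: "(\<Sum>i<Suc N. g (x + i)) = g x + (\<Sum>i<N. g (Suc x + i))"
    by (subst sum.lessThan_Suc_shift) simp
  have "g (x + N) = g x" using assms[of x] by (simp add: add.commute)
  then show ?case using a b Suc by (simp add: algebra_simps)
qed

lemma Sd_add: "Sd c (x + t) = Sd c x + (\<Sum>i<t. of_bool (cdb c (x + i)))"
  unfolding Sd_def by (induction t) auto

lemma cdb_periodic: "cdb c (i + length c) = cdb c i"
  unfolding cdb_def using fc_periodic[of c "Suc i"] fc_periodic[of c i] by simp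

lemma Sd_periodic: "Sd c (x + length c) = Sd c x + cdes c"
proof -
  have "(\<Sum>i<length c. (of_bool (cdb c (x + i))::nat)) = (\<Sum>i<length c. of_bool (cdb c i))"
  proof -
    have "int (\<Sum>i<length c. (of_bool (cdb c (x + i))::nat)) = (\<Sum>i<length c. (of_bool (cdb c (x + i))::int))"
      by simp
    also have "\<dots> = (\<Sum>i<length c. of_bool (cdb c i))"
      by (rule sum_periodic) (simp add: cdb_periodic)
    also have "\<dots> = int (\<Sum>i<length c. (of_bool (cdb c i)::nat))" by simp
    finally show ?thesis by (simp only: of_nat_eq_iff)
  qed
  then show ?thesis unfolding cdes_def using Sd_add[of c x "length c"] by (simp add: Sd_def)
qed

lemma HH_periodic:
  assumes "length c = k * D" "cdes c = D"
  shows "HH c k (x + length c) = HH c k x"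
  unfolding HH_def using Sd_periodic[of c x] assms by (simp add: algebra_simps)

lemma HH_mod:
  assumes "length c = k * D" "cdes c = D"
  shows "HH c k (x mod length c) = HH c k x"
proof -
  have "HH c k (y + length c * j) = HH c k y" for y j
  proof (induction j)
    case (Suc j)
    have "HH c k (y + length c * Suc j) = HH c k ((y + length c * j) + length c)"
      by (simp add: algebra_simps)
    also have "\<dots> = HH c k (y + length c * j)" by (rule HH_periodic[OF assms])
    finally show ?case using Suc by simp
  qed simp
  from this[of "x mod length c" "x div length c"] show ?thesis by simp
qed

lemma HH_Suc: "HH c k (Suc x) = HH c k x + 1 - int k * of_bool (cdb c x)"
  unfolding HH_def Sd_def by (simp add: algebra_simps)



lemma pos_count:
  assumes c: "c \<in> arr N" and N: "N = k * D" and cd: "cdes c = D" and k: "k \<ge> 1" and N2: "N \<ge> 2"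
  shows "card {p. p < N \<and> (\<forall>q<N. q \<noteq> p \<longrightarrow> HH c k q - HH c k p + int k * of_bool (c!q < c!p) > 0)} = k"
proof -
  have len: "length c = N" using arr_len[OF c] .
  have bij: "bij_betw (nth c) {..<N} {0..<N}"
    using c len unfolding arr_def by (intro bij_betw_nth) auto
  define \<psi> where "\<psi> = the_inv_into {..<N} (nth c)"
  have inj: "inj_on (nth c) {..<N}" using bij by (simp add: bij_betw_def)
  have psi1: "\<psi> j < N \<and> c ! (\<psi> j) = j" if "j < N" for j
  proof -
    have "j \<in> nth c ` {..<N}" using bij that by (simp add: bij_betw_def)
    thus ?thesis unfolding \<psi>_def using inj
      by (metis f_the_inv_into_f lessThan_iff the_inv_into_into subsetI)
  qed
  have psi2: "\<psi> (c ! p) = p" if "p < N" for p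
    unfolding \<psi>_def using inj that by (simp add: the_inv_into_f_f)
  have HHm: "HH c k (x mod N) = HH c k x" for x
    using HH_mod[of c k D x] len N cd by simp
  define a where "a j = HH c k (\<psi> j)" for j
  have succ: "\<exists>i<N. i \<noteq> j \<and> a i = a j + 1 - int k * of_bool (i < j)" if j: "j < N" for j
  proof -
    define p where "p = \<psi> j"
    have p: "p < N" "c ! p = j" using psi1[OF j] p_def by auto
    define q where "q = Suc p mod N"
    have q: "q < N" "q \<noteq> p" using N2 p unfolding q_def
      by (auto simp: mod_Suc split: if_splits)
    have "c ! q < N" using arr_nth[OF c q(1)] .
    moreover have "c ! q \<noteq> j" using q p inj by (metis lessThan_iff inj_on_eq_iff)
    moreover have "a (c ! q) = a j + 1 - int k * of_bool (c ! q < j)"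
    proof -
      have "a (c ! q) = HH c k q" unfolding a_def using psi2[OF q(1)] by simp
      also have "\<dots> = HH c k (Suc p)" unfolding q_def by (rule HHm)
      also have "\<dots> = HH c k p + 1 - int k * of_bool (cdb c p)" by (rule HH_Suc)
      also have "cdb c p \<longleftrightarrow> c ! q < j" unfolding cdb_def fc_def q_def using p len by simp
      finally show ?thesis unfolding a_def p_def by simp
    qed
    ultimately show ?thesis by blast
  qed
  have N0: "N > 0" using N2 by simp
  have vc: "card {j. j < N \<and> (\<forall>u<N. u \<noteq> j \<longrightarrow> a u - a j + int k * of_bool (u < j) > 0)} = k"
    by (rule value_count[OF k succ N0])
  have eq: "(\<forall>u<N. u \<noteq> c!p \<longrightarrow> a u - a (c!p) + int k * of_bool (u < c!p) > 0)
      \<longleftrightarrow> (\<forall>q<N. q \<noteq> p \<longrightarrow> HH c k q - HH c k p + int k * of_bool (c!q < c!p) > 0)"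
    if p: "p < N" for p
  proof
    assume h: "\<forall>u<N. u \<noteq> c!p \<longrightarrow> a u - a (c!p) + int k * of_bool (u < c!p) > 0"
    show "\<forall>q<N. q \<noteq> p \<longrightarrow> HH c k q - HH c k p + int k * of_bool (c!q < c!p) > 0"
    proof (intro allI impI)
      fix q assume q: "q < N" "q \<noteq> p"
      have "c!q \<noteq> c!p" using q p inj by (metis lessThan_iff inj_on_eq_iff)
      moreover have "c!q < N" using arr_nth[OF c q(1)] .
      ultimately have "a (c!q) - a (c!p) + int k * of_bool (c!q < c!p) > 0" using h by blast
      thus "HH c k q - HH c k p + int k * of_bool (c!q < c!p) > 0"
        unfolding a_def using psi2 p q by simp
    qed
  next
    assume h: "\<forall>q<N. q \<noteq> p \<longrightarrow> HH c k q - HH c k p + int k * of_bool (c!q < c!p) > 0"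
    show "\<forall>u<N. u \<noteq> c!p \<longrightarrow> a u - a (c!p) + int k * of_bool (u < c!p) > 0"
    proof (intro allI impI)
      fix u assume u: "u < N" "u \<noteq> c!p"
      have "\<psi> u < N" "c ! (\<psi> u) = u" using psi1[OF u(1)] by auto
      moreover hence "\<psi> u \<noteq> p" using u by auto
      ultimately show "a u - a (c!p) + int k * of_bool (u < c!p) > 0"
        unfolding a_def using psi2 p h by metis
    qed
  qed
  have img: "nth c ` {p. p < N \<and> (\<forall>q<N. q \<noteq> p \<longrightarrow> HH c k q - HH c k p + int k * of_bool (c!q < c!p) > 0)}
     = {j. j < N \<and> (\<forall>u<N. u \<noteq> j \<longrightarrow> a u - a j + int k * of_bool (u < j) > 0)}"
  proof (rule set_eqI, rule iffI)
    fix j assume "j \<in> nth c ` {p. p < N \<and> (\<forall>q<N. q \<noteq> p \<longrightarrow> HH c k q - HH c k p + int k * of_bool (c!q < c!p) > 0)}"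
    then obtain p where p: "p < N" "j = c!p" "\<forall>q<N. q \<noteq> p \<longrightarrow> HH c k q - HH c k p + int k * of_bool (c!q < c!p) > 0" by blast
    have "j < N" using arr_nth[OF c p(1)] p(2) by simp
    moreover have "\<forall>u<N. u \<noteq> j \<longrightarrow> a u - a j + int k * of_bool (u < j) > 0"
      using eq[OF p(1)] p(2,3) by simp
    ultimately show "j \<in> {j. j < N \<and> (\<forall>u<N. u \<noteq> j \<longrightarrow> a u - a j + int k * of_bool (u < j) > 0)}"
      by simp
  next
    fix j assume "j \<in> {j. j < N \<and> (\<forall>u<N. u \<noteq> j \<longrightarrow> a u - a j + int k * of_bool (u < j) > 0)}"
    hence j: "j < N" "\<forall>u<N. u \<noteq> j \<longrightarrow> a u - a j + int k * of_bool (u < j) > 0" by auto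
    have "\<psi> j < N" "c ! (\<psi> j) = j" using psi1[OF j(1)] by auto
    hence "\<forall>q<N. q \<noteq> \<psi> j \<longrightarrow> HH c k q - HH c k (\<psi> j) + int k * of_bool (c!q < c!(\<psi> j)) > 0"
      using eq[of "\<psi> j"] j by simp
    hence "\<psi> j \<in> {p. p < N \<and> (\<forall>q<N. q \<noteq> p \<longrightarrow> HH c k q - HH c k p + int k * of_bool (c!q < c!p) > 0)}"
      using \<open>\<psi> j < N\<close> by simp
    thus "j \<in> nth c ` {p. p < N \<and> (\<forall>q<N. q \<noteq> p \<longrightarrow> HH c k q - HH c k p + int k * of_bool (c!q < c!p) > 0)}"
      using \<open>c ! (\<psi> j) = j\<close> by (intro image_eqI[where x="\<psi> j"]) simp_all
  qed
  have "inj_on (nth c) {p. p < N \<and> (\<forall>q<N. q \<noteq> p \<longrightarrow> HH c k q - HH c k p + int k * of_bool (c!q < c!p) > 0)}"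
    using inj by (rule inj_on_subset) auto
  then have "card (nth c ` {p. p < N \<and> (\<forall>q<N. q \<noteq> p \<longrightarrow> HH c k q - HH c k p + int k * of_bool (c!q < c!p) > 0)}) = card {p. p < N \<and> (\<forall>q<N. q \<noteq> p \<longrightarrow> HH c k q - HH c k p + int k * of_bool (c!q < c!p) > 0)}"
    by (rule card_image)
  then show ?thesis using img vc by simp
qed



lemma subm_lt: "N > 0 \<Longrightarrow> subm N x y < N" unfolding subm_def by simp

lemma subm_ge: "y \<le> x \<Longrightarrow> x < N \<Longrightarrow> subm N x y = x - y"
proof -
  assume a: "y \<le> x" "x < N"
  hence e: "x + N - y = (x - y) + N" by linarith
  have l: "x - y < N" using a by linarith
  have "(x + N - y) mod N = ((x - y) + N) mod N" by (simp only: e)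
  also have "\<dots> = (x - y) mod N" by (rule mod_add_self2)
  also have "\<dots> = x - y" using l by (rule mod_less)
  finally show ?thesis unfolding subm_def .
qed

lemma subm_lt2: "x < y \<Longrightarrow> y < N \<Longrightarrow> subm N x y = x + N - y"
proof -
  assume a: "x < y" "y < N"
  hence "x + N - y < N" by linarith
  thus ?thesis unfolding subm_def by (rule mod_less)
qed

lemma subm_key:
  assumes "x < N" "y < N" "v < N"
  shows "(of_bool (subm N y v < subm N x v) :: int) = of_bool (y < x) - of_bool (y < v) + of_bool (x < v)"
  using assms by (cases "x < v"; cases "y < v") (auto simp: subm_ge subm_lt2)

lemma subm_int: "x < N \<Longrightarrow> y < N \<Longrightarrow> int (subm N x y) = (int x - int y) mod int N"
proof -
  assume a: "x < N" "y < N"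
  have "int (subm N x y) = int (x + N - y) mod int N" unfolding subm_def by (simp add: zmod_int)
  also have "int (x + N - y) = (int x - int y) + int N" using a by simp
  finally show ?thesis by simp
qed

lemma subm_inj: "x < N \<Longrightarrow> y < N \<Longrightarrow> v < N \<Longrightarrow> subm N x v = subm N y v \<Longrightarrow> x = y"
  by (cases "x < v"; cases "y < v") (auto simp: subm_ge subm_lt2)

lemma subm_subm:
  assumes "x < N" "y < N" "z < N"
  shows "subm N (subm N x y) (subm N z y) = subm N x z"
proof -
  have N: "N > 0" using assms by simp
  have "int (subm N (subm N x y) (subm N z y)) = (int (subm N x y) - int (subm N z y)) mod int N"
    using subm_lt[OF N] by (intro subm_int) auto
  also have "\<dots> = ((int x - int y) mod int N - (int z - int y) mod int N) mod int N"
    using assms by (simp add: subm_int)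
  also have "\<dots> = ((int x - int y) - (int z - int y)) mod int N" by (rule mod_diff_eq)
  also have "\<dots> = int (subm N x z)" using assms by (simp add: subm_int)
  finally show ?thesis by simp
qed

lemma subm_self: "subm N x x = 0" unfolding subm_def by simp
lemma subm_zero: "x < N \<Longrightarrow> subm N x 0 = x" unfolding subm_def by simp

context
  fixes c :: "nat list" and N p :: nat
  assumes c: "c \<in> arr N" and p: "p < N"
begin

lemma lenc: "length c = N" using arr_len[OF c] .

lemma T_len: "length (T p c) = N" unfolding T_def using lenc by simp

lemma T_nth: "i < N \<Longrightarrow> T p c ! i = subm N (c ! ((p + i) mod N)) (c ! p)"
  unfolding T_def using lenc by (simp add: nth_rotate)

lemma T_arr: "T p c \<in> arr N"
proof -
  let ?f = "\<lambda>x. subm N x (c ! p)"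
  have cp: "c ! p < N" using arr_nth[OF c p] .
  have inj: "inj_on ?f {0..<N}"
  proof (rule inj_onI)
    fix x y assume "x \<in> {0..<N}" "y \<in> {0..<N}" "?f x = ?f y"
    thus "x = y" using subm_inj[of x N y "c ! p"] cp by simp
  qed
  have sub: "?f ` {0..<N} \<subseteq> {0..<N}"
  proof
    fix y assume "y \<in> ?f ` {0..<N}"
    then obtain x where "y = ?f x" by blast
    thus "y \<in> {0..<N}" using subm_lt[of N x "c ! p"] p by simp
  qed
  have img: "?f ` {0..<N} = {0..<N}" using endo_inj_surj[OF _ sub inj] by simp
  have sc: "set c = {0..<N}" and dc: "distinct c" using c unfolding arr_def by auto
  have "set (T p c) = ?f ` set c" unfolding T_def lenc by simp
  hence s: "set (T p c) = {0..<N}" using img sc by simp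
  have "distinct (T p c)" unfolding T_def lenc distinct_map
    using dc inj sc by simp
  thus ?thesis using s unfolding arr_def by simp
qed

lemma T_0: "T p c ! 0 = 0" using T_nth[of 0] p by (simp add: subm_self)

lemma fc_T: "fc (T p c) i = subm N (fc c (p + i)) (c ! p)"
proof -
  have "fc (T p c) i = T p c ! (i mod N)" unfolding fc_def T_len ..
  also have "\<dots> = subm N (c ! ((p + i mod N) mod N)) (c ! p)" using p by (intro T_nth) simp
  also have "(p + i mod N) mod N = (p + i) mod N" by (simp add: mod_add_right_eq)
  finally show ?thesis unfolding fc_def lenc .
qed

lemma fc_p: "fc c p = c ! p" unfolding fc_def lenc using p by simp

lemma Sd_T: "int (Sd (T p c) t) = int (Sd c (p + t)) - int (Sd c p) - of_bool (fc c (p + t) < c ! p)"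
proof (induction t)
  case 0 then show ?case by (simp add: fc_p Sd_def)
next
  case (Suc t)
  have N: "N > 0" using p by simp
  have lt: "fc c i < N" for i using fc_lt[OF c N] .
  have cp: "c ! p < N" using arr_nth[OF c p] .
  have "cdb (T p c) t \<longleftrightarrow> subm N (fc c (Suc (p + t))) (c ! p) < subm N (fc c (p + t)) (c ! p)"
    unfolding cdb_def fc_T by simp
  hence e: "(of_bool (cdb (T p c) t) :: int) = of_bool (fc c (Suc (p + t)) < fc c (p + t))
      - of_bool (fc c (Suc (p + t)) < c ! p) + of_bool (fc c (p + t) < c ! p)"
    using subm_key[OF lt lt cp] by simp
  have "int (Sd (T p c) (Suc t)) = int (Sd (T p c) t) + of_bool (cdb (T p c) t)"
    unfolding Sd_def by simp
  moreover have "int (Sd c (p + Suc t)) = int (Sd c (p + t)) + of_bool (cdb c (p + t))"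
    unfolding Sd_def by simp
  moreover have "cdb c (p + t) \<longleftrightarrow> fc c (Suc (p + t)) < fc c (p + t)" unfolding cdb_def ..
  ultimately show ?case using Suc e by simp
qed

lemma cdes_T: "cdes (T p c) = cdes c"
proof -
  have "int (cdes (T p c)) = int (Sd (T p c) N)" unfolding cdes_def T_len ..
  also have "\<dots> = int (Sd c (p + N)) - int (Sd c p) - of_bool (fc c (p + N) < c ! p)" by (rule Sd_T)
  also have "Sd c (p + N) = Sd c p + cdes c" using Sd_periodic[of c p] lenc by simp
  also have "fc c (p + N) = c ! p" using fc_periodic[of c p] lenc fc_p by simp
  finally show ?thesis by simp
qed

lemma good_T:
  assumes N: "N = k * D" and cd: "cdes c = D"
  shows "good0 k (T p c) \<longleftrightarrow> (\<forall>q<N. q \<noteq> p \<longrightarrow> HH c k q - HH c k p + int k * of_bool (c!q < c!p) > 0)"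
proof -
  have HHm: "HH c k (x mod N) = HH c k x" for x
    using HH_mod[of c k D x] lenc N cd by simp
  define Q where "Q q \<longleftrightarrow> HH c k q - HH c k p + int k * of_bool (c!q < c!p) > 0" for q
  have step: "k * Sd (T p c) t < t \<longleftrightarrow> Q ((p + t) mod N)" for t
  proof -
    have "k * Sd (T p c) t < t \<longleftrightarrow> int k * int (Sd (T p c) t) < int t" by (simp flip: of_nat_mult)
    also have "\<dots> \<longleftrightarrow> int k * (int (Sd c (p + t)) - int (Sd c p) - of_bool (fc c (p + t) < c ! p)) < int t"
      by (simp add: Sd_T)
    also have "\<dots> \<longleftrightarrow> HH c k (p + t) - HH c k p + int k * of_bool (fc c (p + t) < c ! p) > 0"
      unfolding HH_def by (simp add: algebra_simps)
    also have "\<dots> \<longleftrightarrow> Q ((p + t) mod N)" unfolding Q_def HHm fc_def lenc ..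
    finally show ?thesis .
  qed
  have "good0 k (T p c) \<longleftrightarrow> (\<forall>t. 0 < t \<and> t < N \<longrightarrow> Q ((p + t) mod N))"
    unfolding good0_def T_len step ..
  also have "\<dots> \<longleftrightarrow> (\<forall>q<N. q \<noteq> p \<longrightarrow> Q q)"
  proof
    assume h: "\<forall>t. 0 < t \<and> t < N \<longrightarrow> Q ((p + t) mod N)"
    show "\<forall>q<N. q \<noteq> p \<longrightarrow> Q q"
    proof (intro allI impI)
      fix q assume q: "q < N" "q \<noteq> p"
      define t where "t = (if p \<le> q then q - p else q + N - p)"
      have t: "0 < t" "t < N" "(p + t) mod N = q" using q p unfolding t_def by auto
      have "Q ((p + t) mod N)" using h t(1,2) by blast
      thus "Q q" using t(3) by simp
    qed
  next
    assume h: "\<forall>q<N. q \<noteq> p \<longrightarrow> Q q"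
    show "\<forall>t. 0 < t \<and> t < N \<longrightarrow> Q ((p + t) mod N)"
    proof (intro allI impI)
      fix t assume t: "0 < t \<and> t < N"
      have "(p + t) mod N < N" using p by simp
      moreover have "(p + t) mod N \<noteq> p"
      proof (cases "p + t < N")
        case True then show ?thesis using t by simp
      next
        case False
        hence "(p + t) mod N = p + t - N" using p t by (simp add: le_mod_geq)
        then show ?thesis using t p False by linarith
      qed
      ultimately show "Q ((p + t) mod N)" using h by blast
    qed
  qed
  finally show ?thesis unfolding Q_def .
qed

end

lemma T_inv:
  assumes c: "c \<in> arr N" and p: "p < N" and c0: "c ! 0 = 0"
  shows "T ((N - p) mod N) (T p c) = c"
proof -
  have N: "N > 0" using p by simp
  define p' where "p' = (N - p) mod N"
  have p': "p' < N" using N unfolding p'_def by simp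
  have Tc: "T p c \<in> arr N" using T_arr[OF c p] .
  have lenc: "length c = N" using arr_len[OF c] .
  have pp: "(p' + p) mod N = 0"
  proof (cases "p = 0")
    case True then show ?thesis unfolding p'_def by simp
  next
    case False
    hence "p' = N - p" unfolding p'_def using p by simp
    then show ?thesis using p by simp
  qed
  have Tp': "T p c ! p' = subm N 0 (c ! p)" using T_nth[OF c p p'] pp c0 by (simp add: add.commute)
  show ?thesis unfolding p'_def[symmetric]
  proof (rule nth_equalityI)
    show "length (T p' (T p c)) = length c" using T_len[OF Tc p'] lenc by simp
    fix i assume "i < length (T p' (T p c))"
    hence i: "i < N" using T_len[OF Tc p'] by simp
    have "T p' (T p c) ! i = subm N (T p c ! ((p' + i) mod N)) (T p c ! p')" using T_nth[OF Tc p' i] .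
    also have "T p c ! ((p' + i) mod N) = subm N (c ! ((p + (p' + i) mod N) mod N)) (c ! p)"
      using T_nth[OF c p] N by simp
    also have "(p + (p' + i) mod N) mod N = i"
    proof -
      have "(p + (p' + i) mod N) mod N = (p + (p' + i)) mod N" by (simp add: mod_add_right_eq)
      also have "\<dots> = ((p' + p) + i) mod N" by (simp add: algebra_simps)
      also have "\<dots> = ((p' + p) mod N + i) mod N" by (rule mod_add_left_eq[symmetric])
      finally show ?thesis using pp i by simp
    qed
    finally have "T p' (T p c) ! i = subm N (subm N (c ! i) (c ! p)) (subm N 0 (c ! p))" using Tp' by simp
    also have "\<dots> = subm N (c ! i) 0" using arr_nth[OF c i] arr_nth[OF c p] N by (intro subm_subm) auto
    also have "\<dots> = c ! i" using arr_nth[OF c i] by (simp add: subm_zero)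
    finally show "T p' (T p c) ! i = c ! i" .
  qed
qed



lemma card_filter_sum: "finite A \<Longrightarrow> card {x\<in>A. P x} = (\<Sum>x\<in>A. if P x then 1 else 0)"
  by (simp add: sum.inter_filter[symmetric])

lemma double_count:
  assumes k: "k \<ge> 2" and N: "N = k * D" and D: "D \<ge> 1"
  shows "D * card {c \<in> {c \<in> arr N. c!0 = 0 \<and> cdes c = D}. good0 k c} = card {c \<in> arr N. c!0 = 0 \<and> cdes c = D}"
proof -
  define CD where "CD = {c \<in> arr N. c!0 = 0 \<and> cdes c = D}"
  have N2: "N \<ge> 2" using mult_le_mono[OF k D] N by simp
  have finCD: "finite CD"
  proof (rule finite_subset)
    show "CD \<subseteq> {xs. set xs \<subseteq> {0..<N} \<and> length xs = N}" unfolding CD_def arr_def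
      using arr_len by (auto simp: arr_def)
    show "finite {xs. set xs \<subseteq> {0..<N} \<and> length xs = N}" by (rule finite_lists_length_eq) simp
  qed
  have TCD: "T p c \<in> CD" if "c \<in> CD" "p < N" for c p
    using that T_arr[of c N p] T_0[of c N p] cdes_T[of c N p] unfolding CD_def by auto
  have pinv: "(N - (N - p) mod N) mod N = p" if "p < N" for p
  proof (cases "p = 0")
    case True then show ?thesis by simp
  next
    case False
    hence "(N - p) mod N = N - p" using that by simp
    then show ?thesis using that by simp
  qed
  have eachp: "card {c\<in>CD. good0 k (T p c)} = card {c\<in>CD. good0 k c}" if p: "p < N" for p
  proof -
    have inj: "inj_on (T p) CD"
    proof (rule inj_onI)
      fix x y
      assume xy: "x \<in> CD" "y \<in> CD" "T p x = T p y"
      have "x = T ((N - p) mod N) (T p x)" using T_inv[of x N p] p xy unfolding CD_def by simp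
      also have "\<dots> = T ((N - p) mod N) (T p y)" using xy by simp
      also have "\<dots> = y" using T_inv[of y N p] p xy unfolding CD_def by simp
      finally show "x = y" .
    qed
    have "T p ` {c\<in>CD. good0 k (T p c)} = {c\<in>CD. good0 k c}"
    proof
      show "T p ` {c\<in>CD. good0 k (T p c)} \<subseteq> {c\<in>CD. good0 k c}" using TCD p by auto
      show "{c\<in>CD. good0 k c} \<subseteq> T p ` {c\<in>CD. good0 k (T p c)}"
      proof
        fix c' assume c': "c' \<in> {c\<in>CD. good0 k c}"
        define q where "q = (N - p) mod N"
        have q: "q < N" using p unfolding q_def by simp
        have "T ((N - q) mod N) (T q c') = c'" using c' q T_inv[of c' N q] unfolding CD_def by auto
        hence e: "T p (T q c') = c'" using pinv[OF p] unfolding q_def by simp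
        have "T q c' \<in> CD" using TCD c' q by auto
        thus "c' \<in> T p ` {c\<in>CD. good0 k (T p c)}" using e c'
          by (intro image_eqI[where x="T q c'"]) auto
      qed
    qed
    moreover have "inj_on (T p) {c\<in>CD. good0 k (T p c)}" using inj by (rule inj_on_subset) auto
    ultimately show ?thesis using card_image[of "T p" "{c\<in>CD. good0 k (T p c)}"] by simp
  qed
  have perc: "card {p\<in>{..<N}. good0 k (T p c)} = k" if c: "c \<in> CD" for c
  proof -
    have ca: "c \<in> arr N" and cd: "cdes c = D" using c unfolding CD_def by auto
    have "{p\<in>{..<N}. good0 k (T p c)} = {p. p < N \<and> (\<forall>q<N. q \<noteq> p \<longrightarrow> HH c k q - HH c k p + int k * of_bool (c!q < c!p) > 0)}"
    proof (rule set_eqI)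
      fix p show "p \<in> {p\<in>{..<N}. good0 k (T p c)} \<longleftrightarrow> p \<in> {p. p < N \<and> (\<forall>q<N. q \<noteq> p \<longrightarrow> HH c k q - HH c k p + int k * of_bool (c!q < c!p) > 0)}"
        using good_T[OF ca _ N cd, of p] by (simp only: mem_Collect_eq lessThan_iff) blast
    qed
    also have "card \<dots> = k" using pos_count[OF ca N cd _ N2] k by simp
    finally show ?thesis .
  qed
  have "(\<Sum>p<N. card {c\<in>CD. good0 k (T p c)}) = (\<Sum>p<N. \<Sum>c\<in>CD. if good0 k (T p c) then 1 else 0)"
    using finCD by (simp add: card_filter_sum)
  also have "\<dots> = (\<Sum>c\<in>CD. \<Sum>p<N. if good0 k (T p c) then 1 else 0)" by (rule sum.swap)
  also have "\<dots> = (\<Sum>c\<in>CD. card {p\<in>{..<N}. good0 k (T p c)})"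
  proof (rule sum.cong)
    fix c show "(\<Sum>p<N. if good0 k (T p c) then 1 else 0) = card {p\<in>{..<N}. good0 k (T p c)}"
      by (rule card_filter_sum[symmetric]) simp
  qed simp
  also have "\<dots> = (\<Sum>c\<in>CD. k)" using perc by simp
  finally have "(\<Sum>p<N. card {c\<in>CD. good0 k (T p c)}) = k * card CD" by simp
  moreover have "(\<Sum>p<N. card {c\<in>CD. good0 k (T p c)}) = N * card {c\<in>CD. good0 k c}"
    using eachp by simp
  ultimately have "N * card {c\<in>CD. good0 k c} = k * card CD" by simp
  hence "k * (D * card {c\<in>CD. good0 k c}) = k * card CD" using N by (simp only: mult.assoc)
  hence "D * card {c\<in>CD. good0 k c} = card CD" using k by simp
  thus ?thesis unfolding CD_def .
qed



lemma ad_len: "length (ad w) = length w - 1" unfolding ad_def by simp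

lemma ad_nth: "i < length w - 1 \<Longrightarrow> ad w ! i = (if w ! i < w ! (i + 1) then 0 else 1)"
  unfolding ad_def by simp

lemma ad_set: "set (ad w) \<subseteq> {0, 1}" unfolding ad_def by auto

lemma cnt01: "set xs \<subseteq> {0, 1::nat} \<Longrightarrow> count_list xs 0 + count_list xs 1 = length xs"
  by (induction xs) auto

lemma perms_len: "w \<in> perms m \<Longrightarrow> length w = m"
  unfolding perms_def by (metis (mono_tags, lifting) mem_Collect_eq distinct_card card_atLeastAtMost diff_Suc_1)

context
  fixes w :: "nat list" and m :: nat
  assumes w: "w \<in> perms m" and m: "m \<ge> 1"
begin

lemma lw: "length w = m" using perms_len[OF w] .

lemma wnth: "i < m \<Longrightarrow> 1 \<le> w ! i \<and> w ! i \<le> m"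
proof -
  assume i: "i < m"
  hence "w ! i \<in> set w" using lw by simp
  thus ?thesis using w unfolding perms_def by auto
qed

lemma wdist: "i < m \<Longrightarrow> j < m \<Longrightarrow> i \<noteq> j \<Longrightarrow> w ! i \<noteq> w ! j"
  using w lw unfolding perms_def by (simp add: nth_eq_iff_index_eq)

lemma lc: "length (0 # w) = m + 1" using lw by simp

lemma fcc: "i \<le> m \<Longrightarrow> fc (0 # w) i = (0 # w) ! i"
  unfolding fc_def lc by simp

lemma Sd_c: "j \<le> m - 1 \<Longrightarrow> Sd (0 # w) (Suc j) = count_list (take j (ad w)) 1"
proof (induction j)
  case 0
  have "\<not> cdb (0 # w) 0" unfolding cdb_def using fcc[of 0] by simp
  then show ?case unfolding Sd_def by simp
next
  case (Suc j)
  have j: "Suc j < m" using Suc.prems m by linarith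
  have "cdb (0 # w) (Suc j) \<longleftrightarrow> w ! (Suc j) < w ! j"
    unfolding cdb_def using fcc[of "Suc (Suc j)"] fcc[of "Suc j"] j by simp
  moreover have "Sd (0 # w) (Suc (Suc j)) = Sd (0 # w) (Suc j) + of_bool (cdb (0 # w) (Suc j))"
    unfolding Sd_def by simp
  moreover have "take (Suc j) (ad w) = take j (ad w) @ [ad w ! j]"
    using j lw by (simp add: take_Suc_conv_app_nth ad_len)
  moreover have "ad w ! j = (if w ! j < w ! (j + 1) then 0 else 1)" using j lw by (simp add: ad_nth)
  moreover have "w ! j \<noteq> w ! Suc j" using wdist[of j "Suc j"] j by simp
  ultimately show ?case using Suc by auto
qed

lemma count_des: "count_list (ad w) 1 = des w"
proof -
  have "count_list (ad w) 1 = card {i. i < length (ad w) \<and> 1 = ad w ! i}"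
    by (simp add: count_list_eq_length_filter length_filter_conv_card)
  also have "{i. i < length (ad w) \<and> 1 = ad w ! i} = {i. i + 1 < length w \<and> w ! i > w ! (i + 1)}"
  proof (rule set_eqI)
    fix i
    show "i \<in> {i. i < length (ad w) \<and> 1 = ad w ! i} \<longleftrightarrow> i \<in> {i. i + 1 < length w \<and> w ! i > w ! (i + 1)}"
    proof (cases "i + 1 < m")
      case True
      have "w ! i \<noteq> w ! (i + 1)" using wdist[of i "i+1"] True by simp
      then show ?thesis using True lw by (auto simp: ad_len ad_nth)
    next
      case False
      hence "\<not> i < length (ad w)" "\<not> i + 1 < length w" using lw by (simp_all add: ad_len)
      then show ?thesis by simp
    qed
  qed
  finally show ?thesis unfolding des_def .
qed

lemma cdes_c: "cdes (0 # w) = des w + 1"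
proof -
  have "cdes (0 # w) = Sd (0 # w) (Suc m)" unfolding cdes_def lc by simp
  also have "\<dots> = Sd (0 # w) (Suc (m - 1)) + of_bool (cdb (0 # w) m)"
    using m unfolding Sd_def by simp
  also have "Sd (0 # w) (Suc (m - 1)) = count_list (ad w) 1"
    using Sd_c[of "m - 1"] lw by (simp add: ad_len)
  also have "cdb (0 # w) m = True"
  proof -
    have "fc (0 # w) (Suc m) = 0" unfolding fc_def lc by simp
    moreover have "fc (0 # w) m = w ! (m - 1)" using fcc[of m] m
      by (metis Suc_pred' less_le_trans nth_Cons_Suc order_refl zero_less_one)
    moreover have "w ! (m - 1) \<ge> 1" using wnth[of "m - 1"] m by simp
    ultimately show ?thesis unfolding cdb_def by simp
  qed
  finally show ?thesis using count_des by simp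
qed

lemma good_c:
  assumes k: "k \<ge> 1"
  shows "good0 k (0 # w) \<longleftrightarrow> ballot (k - 1) (ad w)"
proof -
  have per: "k * Sd (0 # w) (Suc j) < Suc j \<longleftrightarrow>
      (k - 1) * count_list (take j (ad w)) 1 \<le> count_list (take j (ad w)) 0" if j: "j \<le> m - 1" for j
  proof -
    define c1 where "c1 = count_list (take j (ad w)) 1"
    define c0 where "c0 = count_list (take j (ad w)) 0"
    have "set (take j (ad w)) \<subseteq> {0, 1}" using ad_set set_take_subset by fastforce
    hence "c0 + c1 = length (take j (ad w))" unfolding c0_def c1_def using cnt01 by simp
    also have "\<dots> = j" using j lw m by (simp add: ad_len)
    finally have s: "c0 + c1 = j" .
    obtain k' where k': "k = Suc k'" using k by (cases k) auto
    have "k * Sd (0 # w) (Suc j) < Suc j \<longleftrightarrow> k * c1 < Suc j" using Sd_c[OF j] c1_def by simp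
    also have "\<dots> \<longleftrightarrow> k' * c1 \<le> c0"
    proof -
      have "k * c1 = k' * c1 + c1" using k' by simp
      thus ?thesis using s by linarith
    qed
    finally show ?thesis unfolding c0_def c1_def k' by simp
  qed
  have "good0 k (0 # w) \<longleftrightarrow> (\<forall>j \<le> m - 1. k * Sd (0 # w) (Suc j) < Suc j)"
    unfolding good0_def lc
  proof
    assume h: "\<forall>t. 0 < t \<and> t < m + 1 \<longrightarrow> k * Sd (0 # w) t < t"
    show "\<forall>j \<le> m - 1. k * Sd (0 # w) (Suc j) < Suc j"
    proof (intro allI impI)
      fix j assume "j \<le> m - 1"
      hence "0 < Suc j \<and> Suc j < m + 1" using m by simp
      thus "k * Sd (0 # w) (Suc j) < Suc j" using h by blast
    qed
  next
    assume h: "\<forall>j \<le> m - 1. k * Sd (0 # w) (Suc j) < Suc j"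
    show "\<forall>t. 0 < t \<and> t < m + 1 \<longrightarrow> k * Sd (0 # w) t < t"
    proof (intro allI impI)
      fix t assume t: "0 < t \<and> t < m + 1"
      hence "t - 1 \<le> m - 1" "Suc (t - 1) = t" by auto
      thus "k * Sd (0 # w) t < t" using h by metis
    qed
  qed
  also have "\<dots> \<longleftrightarrow> ballot (k - 1) (ad w)"
    unfolding ballot_def using per lw by (simp add: ad_len)
  finally show ?thesis .
qed

end



lemma card_transfer:
  assumes m: "m \<ge> 1" and PQ: "\<And>w. w \<in> perms m \<Longrightarrow> Q (0 # w) \<longleftrightarrow> P w"
  shows "card {w \<in> perms m. P w} = card {c \<in> arr (m + 1). c ! 0 = 0 \<and> Q c}"
proof -
  have "(Cons 0) ` {w \<in> perms m. P w} = {c \<in> arr (m + 1). c ! 0 = 0 \<and> Q c}"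
  proof
    show "(Cons 0) ` {w \<in> perms m. P w} \<subseteq> {c \<in> arr (m + 1). c ! 0 = 0 \<and> Q c}"
    proof
      fix c assume "c \<in> (Cons 0) ` {w \<in> perms m. P w}"
      then obtain w where wc: "c = 0 # w" "w \<in> perms m" "P w" by blast
      have "0 \<notin> set w" using wc unfolding perms_def by auto
      moreover have "insert 0 {1..m} = {0..<m+1}" by auto
      ultimately have "0 # w \<in> arr (m + 1)" using wc unfolding perms_def arr_def by auto
      thus "c \<in> {c \<in> arr (m + 1). c ! 0 = 0 \<and> Q c}" using wc PQ by simp
    qed
    show "{c \<in> arr (m + 1). c ! 0 = 0 \<and> Q c} \<subseteq> (Cons 0) ` {w \<in> perms m. P w}"
    proof
      fix c assume c: "c \<in> {c \<in> arr (m + 1). c ! 0 = 0 \<and> Q c}"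
      have "length c = m + 1" using c arr_len by blast
      then obtain t where ce: "c = 0 # t" using c by (cases c) auto
      have "distinct (0 # t)" "set (0 # t) = {0..<m+1}" "Q (0 # t)" using c ce unfolding arr_def by auto
      hence d: "distinct t" "0 \<notin> set t" "insert 0 (set t) = {0..<m+1}" by auto
      have "set t = {0..<m+1} - {0}" using d(2) d(3)[symmetric] by auto
      also have "\<dots> = {1..m}" by auto
      finally have "set t = {1..m}" .
      hence tp: "t \<in> perms m" using d unfolding perms_def by simp
      hence "P t" using PQ[OF tp] \<open>Q (0 # t)\<close> by simp
      thus "c \<in> (Cons 0) ` {w \<in> perms m. P w}" using tp ce by blast
    qed
  qed
  moreover have "inj_on (Cons 0) {w \<in> perms m. P w}" by (rule inj_onI) simp
  ultimately show ?thesis using card_image[of "Cons 0" "{w \<in> perms m. P w}"] by simp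
qed

lemma main_k:
  fixes k n :: nat
  assumes k: "k \<ge> 2"
  shows "real (card {w \<in> perms (k * n + k - 1). des w = n \<and> ballot (k - 1) (ad w)})
           = real (eulerian n (k * n + k - 1)) / real (n + 1)"
proof -
  define m where "m = k * n + k - 1"
  have m1: "m \<ge> 1" unfolding m_def using k by simp
  have mN: "m + 1 = k * (n + 1)" unfolding m_def using k by (simp add: algebra_simps)
  have k1: "k \<ge> 1" using k by simp
  have A: "card {w \<in> perms m. des w = n \<and> ballot (k - 1) (ad w)}
      = card {c \<in> arr (m + 1). c ! 0 = 0 \<and> (cdes c = n + 1 \<and> good0 k c)}"
    by (rule card_transfer[OF m1]) (simp add: cdes_c[OF _ m1] good_c[OF _ m1 k1])
  have B: "eulerian n m = card {c \<in> arr (m + 1). c ! 0 = 0 \<and> cdes c = n + 1}"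
    unfolding eulerian_def by (rule card_transfer[OF m1]) (simp add: cdes_c[OF _ m1])
  have "(n + 1) * card {c \<in> {c \<in> arr (m + 1). c!0 = 0 \<and> cdes c = n + 1}. good0 k c}
      = card {c \<in> arr (m + 1). c!0 = 0 \<and> cdes c = n + 1}"
    by (rule double_count[OF k mN]) simp
  moreover have "{c \<in> {c \<in> arr (m + 1). c!0 = 0 \<and> cdes c = n + 1}. good0 k c}
      = {c \<in> arr (m + 1). c ! 0 = 0 \<and> (cdes c = n + 1 \<and> good0 k c)}" by auto
  ultimately have "(n + 1) * card {w \<in> perms m. des w = n \<and> ballot (k - 1) (ad w)} = eulerian n m"
    using A B by simp
  hence "real (n + 1) * real (card {w \<in> perms m. des w = n \<and> ballot (k - 1) (ad w)}) = real (eulerian n m)"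
    by (metis of_nat_mult)
  hence "real (card {w \<in> perms m. des w = n \<and> ballot (k - 1) (ad w)}) = real (eulerian n m) / real (n + 1)"
    by (simp add: field_simps)
  thus ?thesis unfolding m_def .
qed

lemma des_le: "des w \<le> length w - 1"
proof -
  have "{i. i + 1 < length w \<and> w ! (i + 1) < w ! i} \<subseteq> {..<length w - 1}" by auto
  hence "card {i. i + 1 < length w \<and> w ! (i + 1) < w ! i} \<le> card {..<length w - 1}"
    by (intro card_mono) auto
  thus ?thesis unfolding des_def by simp
qed

lemma main_1:
  fixes n :: nat
  shows "real (card {w \<in> perms (1 * n + 1 - 1). des w = n \<and> ballot (1 - 1) (ad w)})
           = real (eulerian n (1 * n + 1 - 1)) / real (n + 1)"
proof -
  have e: "{w \<in> perms n. des w = n \<and> ballot 0 (ad w)} = {w \<in> perms n. des w = n}"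
    unfolding ballot_def by simp
  show ?thesis
  proof (cases "n = 0")
    case True then show ?thesis using e unfolding eulerian_def by simp
  next
    case False
    have emp: "{w \<in> perms n. des w = n} = {}"
    proof -
      have "des w \<noteq> n" if "w \<in> perms n" for w
        using des_le[of w] perms_len[OF that] False by simp
      thus ?thesis by blast
    qed
    have "card {w \<in> perms n. des w = n} = 0" unfolding emp by simp
    then show ?thesis using e unfolding eulerian_def by simp
  qed
qed

lemma dyck_eq: "{w. dyck_perm n w} = {w \<in> perms (2 * n + 2 - 1). des w = n \<and> ballot (2 - 1) (ad w)}"
proof (rule set_eqI)
  fix w
  show "w \<in> {w. dyck_perm n w} \<longleftrightarrow> w \<in> {w \<in> perms (2 * n + 2 - 1). des w = n \<and> ballot (2 - 1) (ad w)}"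
  proof (cases "w \<in> perms (2 * n + 1)")
    case False then show ?thesis unfolding dyck_perm_def by simp
  next
    case True
    have m1: "2 * n + 1 \<ge> 1" by simp
    have lw: "length w = 2 * n + 1" using perms_len[OF True] .
    have la: "length (ad w) = 2 * n" using lw by (simp add: ad_len)
    have c01: "count_list (ad w) 0 + count_list (ad w) 1 = 2 * n"
      using cnt01[OF ad_set] la by simp
    have cd: "count_list (ad w) 1 = des w" using count_des[OF True m1] .
    have "path_point w (length (ad w)) = (n, n) \<longleftrightarrow> des w = n"
      unfolding path_point_def using c01 cd by auto
    moreover have "(\<forall>j \<le> length (ad w). snd (path_point w j) \<le> fst (path_point w j)) \<longleftrightarrow> ballot 1 (ad w)"
      unfolding path_point_def ballot_def by simp
    ultimately show ?thesis using True unfolding dyck_perm_def by simp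
  qed
qed

theorem mainTheorem5:
  fixes k n :: nat
  assumes "k \<ge> 1"
  shows "real (card {w \<in> perms (k * n + k - 1). des w = n \<and> ballot (k - 1) (ad w)})
           = real (eulerian n (k * n + k - 1)) / real (n + 1)
         \<and> real (card {w. dyck_perm n w}) = real (eulerian n (2 * n + 1)) / real (n + 1)"
proof
  show "real (card {w \<in> perms (k * n + k - 1). des w = n \<and> ballot (k - 1) (ad w)})
           = real (eulerian n (k * n + k - 1)) / real (n + 1)"
  proof (cases "k = 1")
    case True then show ?thesis using main_1[of n] by simp
  next
    case False then show ?thesis using main_k[of k n] assms by simp
  qed
  show "real (card {w. dyck_perm n w}) = real (eulerian n (2 * n + 1)) / real (n + 1)"
    using main_k[of 2 n] unfolding dyck_eq by simp
qed


end
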